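(* Let $m\in\mathbb{N}$, $a,b>0$, let $f=(1,f_1,\ldots,f_{p-1})^T$ be a vector of known regression functions on $\mathbb{R}^k$, let $\beta\in\mathbb{R}^p$ be the unknown parameter, and let $x_1,\ldots,x_m\in\mathbb{R}^k$. Let $\Theta\sim\gamma(a,b)$ (density $\frac{b^a}{\Gamma(a)}\theta^{a-1}e^{-b\theta}$, $\theta>0$) and assume that conditionally on $\Theta=\theta$ the random variables $Y_1,\ldots,Y_m$ are independent with $Y_j$ Poisson distributed with mean $\theta\exp(f(x_j)^T\beta)$. Then the Fisher information matrix of $Y=(Y_1,\ldots,Y_m)$ for $\beta$ is $$I(\beta)=\frac{a}{b}\left(I_{Po}(\beta)-\frac{I_{Po}(\beta)e_1e_1^TI_{Po}(\beta)}{e_1^TI_{Po}(\beta)e_1+b}\right),$$ where $I_{Po}(\beta)=\sum_{j=1}^m\exp\bigl(f(x_j)^T\beta\bigr)f(x_j)f(x_j)^T$ and $e_1$ is the first standard unit vector of $\mathbb{R}^p$.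
   Context: The shape parameter $a$ and rate parameter $b$ are known; only $\beta$ is the parameter of interest. $I_{Po}(\beta)$ is the Fisher information matrix of the Poisson model without random effect. *)

theory Defs
  imports "HOL-Analysis.Analysis"
begin

text \<open>Parameter vectors in R^p are represented as functions nat => real,
  only the indices 0..p-1 being relevant. Index 0 corresponds to the intercept.\<close>

definition poisson_dens :: "real \<Rightarrow> nat \<Rightarrow> real" where
  "poisson_dens \<mu> k = exp (- \<mu>) * \<mu> ^ k / fact k"

definition gamma_dens :: "real \<Rightarrow> real \<Rightarrow> real \<Rightarrow> real" where
  "gamma_dens a b \<theta> =
     (if 0 < \<theta> then b powr a / Gamma a * \<theta> powr (a - 1) * exp (- b * \<theta>) else 0)"

definition lin_pred :: "nat \<Rightarrow> ('x \<Rightarrow> nat \<Rightarrow> real) \<Rightarrow> 'x \<Rightarrow> (nat \<Rightarrow> real) \<Rightarrow> real" where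
  "lin_pred p f z \<beta> = (\<Sum>i<p. f z i * \<beta> i)"

definition obs_space :: "nat \<Rightarrow> (nat \<Rightarrow> nat) set" where
  "obs_space m = {y. \<forall>j\<ge>m. y j = 0}"

definition marg_pmf :: "nat \<Rightarrow> nat \<Rightarrow> ('x \<Rightarrow> nat \<Rightarrow> real) \<Rightarrow> (nat \<Rightarrow> 'x) \<Rightarrow> real \<Rightarrow> real
    \<Rightarrow> (nat \<Rightarrow> real) \<Rightarrow> (nat \<Rightarrow> nat) \<Rightarrow> real" where
  "marg_pmf p m f x a b \<beta> y =
     (LINT \<theta>|lborel. gamma_dens a b \<theta> *
        (\<Prod>j<m. poisson_dens (\<theta> * exp (lin_pred p f (x j) \<beta>)) (y j)))"

definition score :: "nat \<Rightarrow> nat \<Rightarrow> ('x \<Rightarrow> nat \<Rightarrow> real) \<Rightarrow> (nat \<Rightarrow> 'x) \<Rightarrow> real \<Rightarrow> real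
    \<Rightarrow> (nat \<Rightarrow> real) \<Rightarrow> (nat \<Rightarrow> nat) \<Rightarrow> nat \<Rightarrow> real" where
  "score p m f x a b \<beta> y r = deriv (\<lambda>t. ln (marg_pmf p m f x a b (\<beta>(r := t)) y)) (\<beta> r)"

definition I_Po :: "nat \<Rightarrow> nat \<Rightarrow> ('x \<Rightarrow> nat \<Rightarrow> real) \<Rightarrow> (nat \<Rightarrow> 'x) \<Rightarrow> (nat \<Rightarrow> real)
    \<Rightarrow> nat \<Rightarrow> nat \<Rightarrow> real" where
  "I_Po p m f x \<beta> r s = (\<Sum>j<m. exp (lin_pred p f (x j) \<beta>) * f (x j) r * f (x j) s)"

definition e1 :: "nat \<Rightarrow> real" where
  "e1 i = (if i = 0 then 1 else 0)"

end

theory Submission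
  imports Defs
begin

lemma gamma_nn:
  fixes s c :: real
  assumes s: "0 < s" and c: "0 < c"
  shows "(\<integral>\<^sup>+t. ennreal (indicator {0<..} t * t powr (s - 1) * exp (- c * t)) \<partial>lborel)
         = ennreal (Gamma s / c powr s)"
proof -
  have "(\<integral>\<^sup>+t. ennreal (indicator {0<..} t * t powr (s - 1) * exp (- c * t)) \<partial>lborel)
      = (\<integral>\<^sup>+t. ennreal (c powr (1 - s) * (indicator {0..} (c * t) * (c * t) powr (s - 1) / exp (c * t))) \<partial>lborel)"
  proof (intro nn_integral_cong)
    fix t :: real
    show "ennreal (indicator {0<..} t * t powr (s - 1) * exp (- c * t)) =
         ennreal (c powr (1 - s) * (indicator {0..} (c * t) * (c * t) powr (s - 1) / exp (c * t)))"
    proof (cases "0 < t")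
      case True
      have "c powr (1 - s) * (c * t) powr (s - 1) = t powr (s - 1)"
        using True c by (simp add: powr_mult powr_diff powr_minus field_simps)
      moreover have "exp (- c * t) = 1 / exp (c * t)" by (simp add: exp_minus field_simps)
      ultimately show ?thesis using True c
        by (simp add: indicator_def zero_le_mult_iff)
    next
      case False
      then show ?thesis using c by (auto simp: indicator_def zero_le_mult_iff)
    qed
  qed
  also have "\<dots> = ennreal (c powr (1 - s)) * (\<integral>\<^sup>+t. ennreal (indicator {0..} (c * t) * (c * t) powr (s - 1) / exp (c * t)) \<partial>lborel)"
    by (subst nn_integral_cmult[symmetric]) (auto simp: ennreal_mult[symmetric] intro!: nn_integral_cong)
  also have "(\<integral>\<^sup>+t. ennreal (indicator {0..} (c * t) * (c * t) powr (s - 1) / exp (c * t)) \<partial>lborel)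
     = (\<integral>\<^sup>+t. ennreal (indicator {0..} t * t powr (s - 1) / exp t) \<partial>distr lborel borel ((*) c))"
    by (subst nn_integral_distr) auto
  also have "\<dots> = (\<integral>\<^sup>+t. ennreal (indicator {0..} t * t powr (s - 1) / exp t) \<partial>density lborel (\<lambda>_. inverse c))"
    using c by (subst lborel_distr_mult) auto
  also have "\<dots> = (\<integral>\<^sup>+t. ennreal (inverse c) * ennreal (indicator {0..} t * t powr (s - 1) / exp t) \<partial>lborel)"
    by (subst nn_integral_density) auto
  also have "\<dots> = ennreal (inverse c) * ennreal (Gamma s)"
    using s by (subst nn_integral_cmult) (auto simp: Gamma_conv_nn_integral_real)
  also have "ennreal (c powr (1 - s)) * (ennreal (inverse c) * ennreal (Gamma s)) = ennreal (Gamma s / c powr s)"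
    using c s Gamma_real_pos[OF s]
    by (simp add: ennreal_mult[symmetric] powr_diff field_simps)
  finally show ?thesis .
qed

definition mu :: "nat \<Rightarrow> ('x \<Rightarrow> nat \<Rightarrow> real) \<Rightarrow> (nat \<Rightarrow> 'x) \<Rightarrow> (nat \<Rightarrow> real) \<Rightarrow> nat \<Rightarrow> real" where
  "mu p f x \<beta> j = exp (lin_pred p f (x j) \<beta>)"

definition Kc :: "nat \<Rightarrow> nat \<Rightarrow> ('x \<Rightarrow> nat \<Rightarrow> real) \<Rightarrow> (nat \<Rightarrow> 'x) \<Rightarrow> real \<Rightarrow> real
    \<Rightarrow> (nat \<Rightarrow> real) \<Rightarrow> (nat \<Rightarrow> nat) \<Rightarrow> real" where
  "Kc p m f x a b \<beta> y = b powr a / Gamma a * (\<Prod>j<m. mu p f x \<beta> j ^ y j / fact (y j))"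

definition G :: "nat \<Rightarrow> nat \<Rightarrow> ('x \<Rightarrow> nat \<Rightarrow> real) \<Rightarrow> (nat \<Rightarrow> 'x) \<Rightarrow> real \<Rightarrow> real
    \<Rightarrow> (nat \<Rightarrow> real) \<Rightarrow> (nat \<Rightarrow> nat) \<Rightarrow> real \<Rightarrow> real" where
  "G p m f x a b \<beta> y \<theta> = gamma_dens a b \<theta> *
        (\<Prod>j<m. poisson_dens (\<theta> * exp (lin_pred p f (x j) \<beta>)) (y j))"

lemma mu_pos: "0 < mu p f x \<beta> j" by (simp add: mu_def)

lemma Kc_pos: "0 < a \<Longrightarrow> 0 < b \<Longrightarrow> 0 < Kc p m f x a b \<beta> y"
  unfolding Kc_def using mu_pos[of p f x \<beta>]
  by (intro mult_pos_pos divide_pos_pos prod_pos Gamma_real_pos) auto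

lemma G_eq:
  assumes "0 < a" "0 < b"
  shows "G p m f x a b \<beta> y \<theta> = Kc p m f x a b \<beta> y *
     (indicator {0<..} \<theta> * \<theta> powr (a + real (\<Sum>j<m. y j) - 1)
       * exp (- (b + (\<Sum>j<m. mu p f x \<beta> j)) * \<theta>))"
proof (cases "0 < \<theta>")
  case True
  have P: "(\<Prod>j<m. poisson_dens (\<theta> * exp (lin_pred p f (x j) \<beta>)) (y j))
     = exp (- (\<Sum>j<m. mu p f x \<beta> j) * \<theta>) * \<theta> ^ (\<Sum>j<m. y j) * (\<Prod>j<m. mu p f x \<beta> j ^ y j / fact (y j))"
    by (simp add: poisson_dens_def mu_def[symmetric] prod.distrib power_mult_distrib power_sum
        exp_sum[symmetric] sum_negf sum_distrib_left mult_ac prod_dividef)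
  have "\<theta> powr (a - 1) * \<theta> ^ (\<Sum>j<m. y j) = \<theta> powr (a + real (\<Sum>j<m. y j) - 1)"
    using True by (simp add: powr_realpow[symmetric] powr_add[symmetric] add.commute diff_add_eq)
  moreover have "exp (- b * \<theta>) * exp (- (\<Sum>j<m. mu p f x \<beta> j) * \<theta>) = exp (- (b + (\<Sum>j<m. mu p f x \<beta> j)) * \<theta>)"
    by (simp add: exp_add[symmetric] algebra_simps)
  ultimately show ?thesis
  proof -
    assume e1: "\<theta> powr (a - 1) * \<theta> ^ (\<Sum>j<m. y j) = \<theta> powr (a + real (\<Sum>j<m. y j) - 1)"
      and e2: "exp (- b * \<theta>) * exp (- (\<Sum>j<m. mu p f x \<beta> j) * \<theta>) = exp (- (b + (\<Sum>j<m. mu p f x \<beta> j)) * \<theta>)"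
    define Q where "Q = (\<Prod>j<m. mu p f x \<beta> j ^ y j / fact (y j))"
    have "(if 0 < \<theta> then b powr a / Gamma a * \<theta> powr (a - 1) * exp (- b * \<theta>) else 0) *
      (exp (- (\<Sum>j<m. mu p f x \<beta> j) * \<theta>) * \<theta> ^ (\<Sum>j<m. y j) * Q)
      = b powr a / Gamma a * Q * ((\<theta> powr (a - 1) * \<theta> ^ (\<Sum>j<m. y j)) *
           (exp (- b * \<theta>) * exp (- (\<Sum>j<m. mu p f x \<beta> j) * \<theta>)))"
      using True by (simp only: if_True mult_ac)
    also have "\<dots> = b powr a / Gamma a * Q * (indicator {0<..} \<theta> * \<theta> powr (a + real (\<Sum>j<m. y j) - 1)
       * exp (- (b + (\<Sum>j<m. mu p f x \<beta> j)) * \<theta>))"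
      using True by (simp only: e1 e2 indicator_simps) simp
    finally have X: "(if 0 < \<theta> then b powr a / Gamma a * \<theta> powr (a - 1) * exp (- b * \<theta>) else 0) *
      (exp (- (\<Sum>j<m. mu p f x \<beta> j) * \<theta>) * \<theta> ^ (\<Sum>j<m. y j) * Q) = b powr a / Gamma a * Q * (indicator {0<..} \<theta> * \<theta> powr (a + real (\<Sum>j<m. y j) - 1)
       * exp (- (b + (\<Sum>j<m. mu p f x \<beta> j)) * \<theta>))" .
    show ?thesis unfolding G_def P Kc_def gamma_dens_def X[unfolded Q_def] by (simp only: Q_def)
  qed
next
  case False
  then show ?thesis by (simp add: G_def gamma_dens_def)
qed

definition CFv :: "nat \<Rightarrow> nat \<Rightarrow> ('x \<Rightarrow> nat \<Rightarrow> real) \<Rightarrow> (nat \<Rightarrow> 'x) \<Rightarrow> real \<Rightarrow> real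
    \<Rightarrow> (nat \<Rightarrow> real) \<Rightarrow> (nat \<Rightarrow> nat) \<Rightarrow> real" where
  "CFv p m f x a b \<beta> y = Kc p m f x a b \<beta> y * (Gamma (a + real (\<Sum>j<m. y j)) /
      (b + (\<Sum>j<m. mu p f x \<beta> j)) powr (a + real (\<Sum>j<m. y j)))"

lemma G_nonneg: "0 < a \<Longrightarrow> 0 < b \<Longrightarrow> 0 \<le> G p m f x a b \<beta> y \<theta>"
  by (subst G_eq) (auto intro!: mult_nonneg_nonneg less_imp_le[OF Kc_pos])

lemma G_meas[measurable]: "0 < a \<Longrightarrow> 0 < b \<Longrightarrow> G p m f x a b \<beta> y \<in> borel_measurable borel"
proof -
  assume a: "0 < a" "0 < b"
  have "G p m f x a b \<beta> y = (\<lambda>\<theta>. Kc p m f x a b \<beta> y *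
     (indicator {0<..} \<theta> * \<theta> powr (a + real (\<Sum>j<m. y j) - 1)
       * exp (- (b + (\<Sum>j<m. mu p f x \<beta> j)) * \<theta>)))"
    using G_eq[OF a] by blast
  then show ?thesis by simp
qed

lemma sum_mu_nonneg: "0 \<le> (\<Sum>j<m. mu p f x \<beta> j)"
  by (intro sum_nonneg less_imp_le[OF mu_pos])

lemma CF_nn:
  assumes "0 < a" "0 < b"
  shows "(\<integral>\<^sup>+\<theta>. ennreal (G p m f x a b \<beta> y \<theta>) \<partial>lborel) = ennreal (CFv p m f x a b \<beta> y)"
proof -
  have "(\<integral>\<^sup>+\<theta>. ennreal (G p m f x a b \<beta> y \<theta>) \<partial>lborel) =
     (\<integral>\<^sup>+\<theta>. ennreal (Kc p m f x a b \<beta> y) * ennreal (indicator {0<..} \<theta> * \<theta> powr (a + real (\<Sum>j<m. y j) - 1)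
       * exp (- (b + (\<Sum>j<m. mu p f x \<beta> j)) * \<theta>)) \<partial>lborel)"
    using assms Kc_pos[OF assms, of p m f x \<beta> y]
    by (intro nn_integral_cong) (simp add: G_eq ennreal_mult)
  also have "\<dots> = ennreal (Kc p m f x a b \<beta> y) * ennreal (Gamma (a + real (\<Sum>j<m. y j)) /
      (b + (\<Sum>j<m. mu p f x \<beta> j)) powr (a + real (\<Sum>j<m. y j)))"
  proof -
    have "0 \<le> (\<Sum>j<m. real (y j))" by (simp add: sum_nonneg)
    then have gn: "(\<integral>\<^sup>+t. ennreal (indicator {0<..} t * t powr ((a + real (\<Sum>j<m. y j)) - 1) * exp (- (b + (\<Sum>j<m. mu p f x \<beta> j)) * t)) \<partial>lborel)
         = ennreal (Gamma (a + real (\<Sum>j<m. y j)) / (b + (\<Sum>j<m. mu p f x \<beta> j)) powr (a + real (\<Sum>j<m. y j)))"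
      using assms sum_mu_nonneg[where m=m and p=p and f=f and x=x and \<beta>=\<beta>]
      by (intro gamma_nn) auto
    show ?thesis using gn by (subst nn_integral_cmult) auto
  qed
  also have "\<dots> = ennreal (CFv p m f x a b \<beta> y)"
    unfolding CFv_def using Kc_pos[OF assms, of p m f x \<beta> y]
    by (subst ennreal_mult') auto
  finally show ?thesis .
qed

lemma CFv_pos: "0 < a \<Longrightarrow> 0 < b \<Longrightarrow> 0 < CFv p m f x a b \<beta> y"
  unfolding CFv_def using sum_mu_nonneg[where m=m and p=p and f=f and x=x and \<beta>=\<beta>]
     sum_nonneg[of "{..<m}" "\<lambda>j. real (y j)"]
  by (intro mult_pos_pos Kc_pos divide_pos_pos Gamma_real_pos) auto

lemma marg_CF:
  assumes "0 < a" "0 < b"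
  shows "marg_pmf p m f x a b \<beta> y = CFv p m f x a b \<beta> y"
proof -
  have "integrable lborel (G p m f x a b \<beta> y) \<and> integral\<^sup>L lborel (G p m f x a b \<beta> y) = CFv p m f x a b \<beta> y"
    using CF_nn[OF assms] G_nonneg[OF assms] CFv_pos[OF assms, of p m f x \<beta> y]
    by (subst nn_integral_eq_integrable[symmetric]) (auto simp: less_imp_le assms intro!: AE_I2)
  then show ?thesis unfolding marg_pmf_def G_def[symmetric] by simp
qed

lemma lin_upd:
  assumes "r < p"
  shows "lin_pred p f z (\<beta>(r := t)) = lin_pred p f z \<beta> + f z r * (t - \<beta> r)"
proof -
  have "lin_pred p f z (\<beta>(r := t)) = (\<Sum>i<p. f z i * \<beta> i + (if i = r then f z r * (t - \<beta> r) else 0))"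
    unfolding lin_pred_def by (intro sum.cong) (auto simp: algebra_simps)
  also have "\<dots> = lin_pred p f z \<beta> + f z r * (t - \<beta> r)"
    using assms by (simp add: sum.distrib lin_pred_def)
  finally show ?thesis .
qed

lemma ln_CFv:
  assumes "0 < a" "0 < b"
  shows "ln (CFv p m f x a b \<beta> y) = ln (b powr a / Gamma a) + ln (Gamma (a + real (\<Sum>j<m. y j)))
     - (\<Sum>j<m. ln (fact (y j))) + (\<Sum>j<m. real (y j) * lin_pred p f (x j) \<beta>)
     - (a + real (\<Sum>j<m. y j)) * ln (b + (\<Sum>j<m. mu p f x \<beta> j))"
proof -
  have N: "0 \<le> (\<Sum>j<m. real (y j))" by (simp add: sum_nonneg)
  have M: "0 \<le> (\<Sum>j<m. mu p f x \<beta> j)" by (rule sum_mu_nonneg)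
  have G1: "0 < Gamma (a + real (\<Sum>j<m. y j))" using N assms by (intro Gamma_real_pos) auto
  have pr: "ln (\<Prod>j<m. mu p f x \<beta> j ^ y j / fact (y j)) = (\<Sum>j<m. real (y j) * lin_pred p f (x j) \<beta> - ln (fact (y j)))"
    by (subst ln_prod) (auto simp: mu_pos ln_div ln_realpow mu_def)
  have "ln (CFv p m f x a b \<beta> y) = ln (b powr a / Gamma a) + ln (\<Prod>j<m. mu p f x \<beta> j ^ y j / fact (y j))
      + ln (Gamma (a + real (\<Sum>j<m. y j))) - ln ((b + (\<Sum>j<m. mu p f x \<beta> j)) powr (a + real (\<Sum>j<m. y j)))"
  proof -
    have p1: "0 < b powr a / Gamma a" using assms by (simp add: Gamma_real_pos)
    have p2: "0 < (\<Prod>j<m. mu p f x \<beta> j ^ y j / fact (y j))" by (intro prod_pos) (simp add: mu_pos)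
    have p4: "0 < (b + (\<Sum>j<m. mu p f x \<beta> j)) powr (a + real (\<Sum>j<m. y j))" using assms M by simp
    have L: "\<And>A1 A2 A3 A4::real. 0<A1 \<Longrightarrow> 0<A2 \<Longrightarrow> 0<A3 \<Longrightarrow> 0<A4 \<Longrightarrow>
       ln (A1*A2*(A3/A4)) = ln A1 + ln A2 + ln A3 - ln A4"
      by (simp add: ln_mult ln_div)
    show ?thesis unfolding CFv_def Kc_def
      by (rule L[OF p1 p2 G1 p4])
  qed
  also have "\<dots> = ln (b powr a / Gamma a) + ln (Gamma (a + real (\<Sum>j<m. y j)))
     - (\<Sum>j<m. ln (fact (y j))) + (\<Sum>j<m. real (y j) * lin_pred p f (x j) \<beta>)
     - (a + real (\<Sum>j<m. y j)) * ln (b + (\<Sum>j<m. mu p f x \<beta> j))"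
    using assms M by (simp add: pr ln_powr sum_subtractf)
  finally show ?thesis .
qed

lemma score_deriv:
  assumes "0 < a" "0 < b" "r < p"
  shows "((\<lambda>t. ln (marg_pmf p m f x a b (\<beta>(r := t)) y)) has_real_derivative
     ((\<Sum>j<m. real (y j) * f (x j) r) - (a + real (\<Sum>j<m. y j)) *
        (\<Sum>j<m. mu p f x \<beta> j * f (x j) r) / (b + (\<Sum>j<m. mu p f x \<beta> j)))) (at (\<beta> r))"
proof -
  define c where "c = ln (b powr a / Gamma a) + ln (Gamma (a + real (\<Sum>j<m. y j))) - (\<Sum>j<m. ln (fact (y j)))"
  define A where "A = a + real (\<Sum>j<m. y j)"
  have eq: "(\<lambda>t. ln (marg_pmf p m f x a b (\<beta>(r := t)) y)) = (\<lambda>t. c +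
     (\<Sum>j<m. real (y j) * (lin_pred p f (x j) \<beta> + f (x j) r * (t - \<beta> r)))
     - A * ln (b + (\<Sum>j<m. exp (lin_pred p f (x j) \<beta> + f (x j) r * (t - \<beta> r)))))"
    by (rule ext) (simp add: marg_CF assms ln_CFv c_def lin_upd mu_def A_def)
  have M: "0 \<le> (\<Sum>j<m. mu p f x \<beta> j)" by (rule sum_mu_nonneg)
  have d1: "((\<lambda>t. \<Sum>j<m. real (y j) * (lin_pred p f (x j) \<beta> + f (x j) r * (t - \<beta> r)))
      has_real_derivative (\<Sum>j<m. real (y j) * f (x j) r)) (at (\<beta> r))"
    by (rule derivative_eq_intros refl)+ (simp add: mult.commute)
  have d2: "((\<lambda>t. b + (\<Sum>j<m. exp (lin_pred p f (x j) \<beta> + f (x j) r * (t - \<beta> r))))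
      has_real_derivative (\<Sum>j<m. mu p f x \<beta> j * f (x j) r)) (at (\<beta> r))"
    by (rule derivative_eq_intros refl)+ (simp add: mu_def)
  have pos: "0 < b + (\<Sum>j<m. exp (lin_pred p f (x j) \<beta> + f (x j) r * (\<beta> r - \<beta> r)))"
    using M assms by (simp add: mu_def)
  have d3: "((\<lambda>t. ln (b + (\<Sum>j<m. exp (lin_pred p f (x j) \<beta> + f (x j) r * (t - \<beta> r)))))
      has_real_derivative ((\<Sum>j<m. mu p f x \<beta> j * f (x j) r) / (b + (\<Sum>j<m. mu p f x \<beta> j)))) (at (\<beta> r))"
    using DERIV_ln_divide[OF pos] d2 DERIV_chain2 pos by (fastforce simp: mu_def intro: DERIV_chain2[OF DERIV_ln_divide[OF pos] d2])
  show ?thesis unfolding eq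
    using DERIV_diff[OF DERIV_add[OF DERIV_const[of c] d1] DERIV_cmult[OF d3, of A]]
    by (simp add: A_def)
qed

lemma countable_obs: "countable (obs_space m)"
proof -
  have "obs_space m \<subseteq> (\<lambda>l j. if j < length l then l ! j else 0) ` (UNIV :: nat list set)"
  proof
    fix y assume y: "y \<in> obs_space m"
    have "y = (\<lambda>j. if j < length (map y [0..<m]) then map y [0..<m] ! j else 0)"
      using y by (auto simp: obs_space_def fun_eq_iff)
    then show "y \<in> (\<lambda>l j. if j < length l then l ! j else 0) ` UNIV" by blast
  qed
  then show ?thesis by (rule countable_subset) simp
qed

lemma obs_bij: "bij_betw (\<lambda>(y, n). y(m := n)) (obs_space m \<times> UNIV) (obs_space (Suc m))"
proof (rule bij_betw_byWitness[where f'="\<lambda>y. (y(m := 0), y m)"])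
  show "\<forall>a\<in>obs_space m \<times> UNIV. (\<lambda>y. (y(m := 0), y m)) ((\<lambda>(y, n). y(m := n)) a) = a"
    by (auto simp: obs_space_def fun_eq_iff)
  show "\<forall>a'\<in>obs_space (Suc m). (\<lambda>(y, n). y(m := n)) ((\<lambda>y. (y(m := 0), y m)) a') = a'"
    by (auto simp: obs_space_def fun_eq_iff)
  show "(\<lambda>(y, n). y(m := n)) ` (obs_space m \<times> UNIV) \<subseteq> obs_space (Suc m)"
    by (auto simp: obs_space_def)
  show "(\<lambda>y. (y(m := 0), y m)) ` obs_space (Suc m) \<subseteq> obs_space m \<times> UNIV"
    by (auto simp: obs_space_def)
qed

lemma fact_sum:
  fixes g :: "nat \<Rightarrow> nat \<Rightarrow> ennreal"
  shows "(\<integral>\<^sup>+y. (\<Prod>j<m. g j (y j)) \<partial>count_space (obs_space m)) = (\<Prod>j<m. \<integral>\<^sup>+n. g j n \<partial>count_space UNIV)"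
proof (induction m)
  case 0
  have "obs_space 0 = {\<lambda>_. 0}" by (auto simp: obs_space_def)
  then show ?case by (simp add: nn_integral_count_space_finite)
next
  case (Suc m)
  have "(\<integral>\<^sup>+y. (\<Prod>j<Suc m. g j (y j)) \<partial>count_space (obs_space (Suc m)))
     = (\<integral>\<^sup>+z. (\<Prod>j<Suc m. g j (((\<lambda>(y, n). y(m := n)) z) j)) \<partial>count_space (obs_space m \<times> UNIV))"
    by (rule nn_integral_bij_count_space[OF obs_bij, symmetric])
  also have "\<dots> = (\<integral>\<^sup>+z. (\<Prod>j<m. g j (fst z j)) * g m (snd z) \<partial>count_space (obs_space m \<times> UNIV))"
    by (intro nn_integral_cong) (auto simp: split_beta intro!: prod.cong)
  also have "\<dots> = (\<integral>\<^sup>+y. \<integral>\<^sup>+n. (\<Prod>j<m. g j (y j)) * g m n \<partial>count_space UNIV \<partial>count_space (obs_space m))"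
  proof -
    have cs: "count_space (obs_space m \<times> UNIV) = count_space (obs_space m) \<Otimes>\<^sub>M count_space (UNIV::nat set)"
      by (simp add: pair_measure_countable countable_obs)
    have sf: "sigma_finite_measure (count_space (UNIV::nat set))"
      by (simp add: sigma_finite_measure_count_space_countable)
    show ?thesis unfolding cs
      using sigma_finite_measure.nn_integral_fst[OF sf, of "\<lambda>z. (\<Prod>j<m. g j (fst z j)) * g m (snd z)" "count_space (obs_space m)"]
      by (simp add: cs[symmetric])
  qed
  also have "\<dots> = (\<integral>\<^sup>+y. (\<Prod>j<m. g j (y j)) * (\<integral>\<^sup>+n. g m n \<partial>count_space UNIV) \<partial>count_space (obs_space m))"
    by (intro nn_integral_cong nn_integral_cmult) simp
  also have "\<dots> = (\<Prod>j<Suc m. \<integral>\<^sup>+n. g j n \<partial>count_space UNIV)"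
    by (subst nn_integral_multc) (simp_all add: Suc)
  finally show ?case .
qed

lemma pois0: "(\<lambda>n. poisson_dens l n) sums 1"
proof -
  have "(\<lambda>n. exp (- l) * (l ^ n /\<^sub>R fact n)) sums (exp (- l) * exp l)"
    by (intro sums_mult exp_converges)
  then show ?thesis by (simp add: poisson_dens_def exp_minus field_simps)
qed

lemma pois1: "(\<lambda>n. poisson_dens l n * real n) sums l"
proof -
  have "(\<lambda>k. l * poisson_dens l k) sums (l * 1)" by (intro sums_mult pois0)
  moreover have "poisson_dens l (Suc k) * real (Suc k) = l * poisson_dens l k" for k
    by (simp add: poisson_dens_def field_simps del: of_nat_Suc)
  ultimately have "(\<lambda>k. poisson_dens l (Suc k) * real (Suc k)) sums l" by simp
  then show ?thesis by (subst (asm) sums_Suc_iff) simp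
qed

lemma pois2: "(\<lambda>n. poisson_dens l n * (real n * real n)) sums (l + l * l)"
proof -
  have "(\<lambda>k. l * (poisson_dens l k * real k) + l * poisson_dens l k) sums (l * l + l * 1)"
    by (intro sums_add sums_mult pois0 pois1)
  moreover have "poisson_dens l (Suc k) * (real (Suc k) * real (Suc k)) = l * (poisson_dens l k * real k) + l * poisson_dens l k" for k
    by (simp add: poisson_dens_def field_simps del: of_nat_Suc) (simp add: algebra_simps)
  ultimately have "(\<lambda>k. poisson_dens l (Suc k) * (real (Suc k) * real (Suc k))) sums (l + l * l)" by (simp add: algebra_simps)
  then show ?thesis by (subst (asm) sums_Suc_iff) simp
qed

lemma pois_nonneg: "0 \<le> l \<Longrightarrow> 0 \<le> poisson_dens l n"
  by (simp add: poisson_dens_def)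

lemma pois_nn:
  assumes "0 \<le> l" and "(\<lambda>n. poisson_dens l n * h n) sums v" and "\<And>n. 0 \<le> h n"
  shows "(\<integral>\<^sup>+n. ennreal (poisson_dens l n * h n) \<partial>count_space UNIV) = ennreal v"
  using assms pois_nonneg[OF assms(1)]
  by (subst nn_integral_count_space_nat) (intro suminf_ennreal_eq, auto)

lemma gamma_mom:
  assumes a: "0 < a" and b: "0 < b"
  shows "(\<integral>\<^sup>+\<theta>. ennreal (gamma_dens a b \<theta> * \<theta> ^ k) \<partial>lborel) = ennreal (Gamma (a + real k) / (Gamma a * b ^ k))"
proof -
  have "(\<integral>\<^sup>+\<theta>. ennreal (gamma_dens a b \<theta> * \<theta> ^ k) \<partial>lborel)
    = (\<integral>\<^sup>+\<theta>. ennreal (b powr a / Gamma a) * ennreal (indicator {0<..} \<theta> * \<theta> powr ((a + real k) - 1) * exp (- b * \<theta>)) \<partial>lborel)"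
  proof (intro nn_integral_cong)
    fix \<theta> :: real
    show "ennreal (gamma_dens a b \<theta> * \<theta> ^ k) = ennreal (b powr a / Gamma a) * ennreal (indicator {0<..} \<theta> * \<theta> powr ((a + real k) - 1) * exp (- b * \<theta>))"
    proof (cases "0 < \<theta>")
      case True
      have "\<theta> powr (a - 1) * \<theta> ^ k = \<theta> powr ((a + real k) - 1)"
        using True by (simp add: powr_realpow[symmetric] powr_add[symmetric] algebra_simps)
      then show ?thesis using True a b
        by (simp add: gamma_dens_def ennreal_mult'[symmetric] Gamma_real_pos less_imp_le)
    next
      case False
      then show ?thesis by (simp add: gamma_dens_def)
    qed
  qed
  also have "\<dots> = ennreal (b powr a / Gamma a) * ennreal (Gamma (a + real k) / b powr (a + real k))"
    using a b gamma_nn[of "a + real k" b] by (subst nn_integral_cmult) auto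
  also have "\<dots> = ennreal (Gamma (a + real k) / (Gamma a * b ^ k))"
    using a b Gamma_real_pos[OF a]
    by (subst ennreal_mult'[symmetric]) (auto simp: powr_add powr_realpow field_simps)
  finally show ?thesis .
qed

lemma BR:
  fixes F :: "'a \<Rightarrow> real"
  assumes "\<And>y. y \<in> A \<Longrightarrow> 0 \<le> F y" "(\<integral>\<^sup>+y. ennreal (F y) \<partial>count_space A) = ennreal R" "0 \<le> R"
  shows "(F has_sum R) A"
proof -
  have "integrable (count_space A) F \<and> integral\<^sup>L (count_space A) F = R"
    using assms by (subst nn_integral_eq_integrable[symmetric]) (auto simp: AE_count_space)
  then have i: "Infinite_Set_Sum.abs_summable_on F A" "infsetsum F A = R"
    by (auto simp: Infinite_Set_Sum.abs_summable_on_def infsetsum_def)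
  then have "Infinite_Sum.abs_summable_on F A" using abs_summable_equivalent by blast
  then have "F summable_on A" by (rule abs_summable_summable)
  moreover have "infsum F A = R" using i infsetsum_infsum by metis
  ultimately show ?thesis using has_sum_infsum by metis
qed

lemma MOM:
  fixes h :: "nat \<Rightarrow> nat \<Rightarrow> real" and V :: "nat \<Rightarrow> real \<Rightarrow> real"
  assumes a: "0 < a" and b: "0 < b"
    and hnn: "\<And>j n. 0 \<le> h j n"
    and Vs: "\<And>j \<theta>. j < m \<Longrightarrow> 0 < \<theta> \<Longrightarrow> (\<lambda>n. poisson_dens (\<theta> * mu p f x \<beta> j) n * h j n) sums (V j \<theta>)"
    and Vnn: "\<And>j \<theta>. j < m \<Longrightarrow> 0 < \<theta> \<Longrightarrow> 0 \<le> V j \<theta>"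
    and R: "(\<integral>\<^sup>+\<theta>. ennreal (gamma_dens a b \<theta> * (\<Prod>j<m. V j \<theta>)) \<partial>lborel) = ennreal R"
    and R0: "0 \<le> R"
  shows "((\<lambda>y. marg_pmf p m f x a b \<beta> y * (\<Prod>j<m. h j (y j))) has_sum R) (obs_space m)"
proof (rule BR)
  show "0 \<le> marg_pmf p m f x a b \<beta> y * (\<Prod>j<m. h j (y j))" for y
    unfolding marg_CF[OF a b]
    by (intro mult_nonneg_nonneg less_imp_le[OF CFv_pos[OF a b]] prod_nonneg) (auto simp: hnn)
  show "0 \<le> R" by fact
  have "(\<integral>\<^sup>+y. ennreal (marg_pmf p m f x a b \<beta> y * (\<Prod>j<m. h j (y j))) \<partial>count_space (obs_space m))
     = (\<integral>\<^sup>+y. \<integral>\<^sup>+\<theta>. ennreal (G p m f x a b \<beta> y \<theta> * (\<Prod>j<m. h j (y j))) \<partial>lborel \<partial>count_space (obs_space m))"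
  proof (intro nn_integral_cong)
    fix y
    have "ennreal (marg_pmf p m f x a b \<beta> y * (\<Prod>j<m. h j (y j)))
       = (\<integral>\<^sup>+\<theta>. ennreal (G p m f x a b \<beta> y \<theta>) \<partial>lborel) * ennreal (\<Prod>j<m. h j (y j))"
      using CFv_pos[OF a b, of p m f x \<beta> y] by (simp add: marg_CF a b CF_nn ennreal_mult')
    also have "\<dots> = (\<integral>\<^sup>+\<theta>. ennreal (G p m f x a b \<beta> y \<theta> * (\<Prod>j<m. h j (y j))) \<partial>lborel)"
      by (subst nn_integral_multc[symmetric]) (auto simp: a b ennreal_mult'[OF G_nonneg[OF a b]] intro!: nn_integral_cong)
    finally show "ennreal (marg_pmf p m f x a b \<beta> y * (\<Prod>j<m. h j (y j))) = \<dots>" .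
  qed
  also have "\<dots> = (\<integral>\<^sup>+\<theta>. \<integral>\<^sup>+y. ennreal (G p m f x a b \<beta> y \<theta> * (\<Prod>j<m. h j (y j))) \<partial>count_space (obs_space m) \<partial>lborel)"
    by (rule nn_integral_count_space_nn_integral[symmetric]) (auto simp: countable_obs a b)
  also have "\<dots> = (\<integral>\<^sup>+\<theta>. ennreal (gamma_dens a b \<theta> * (\<Prod>j<m. V j \<theta>)) \<partial>lborel)"
  proof (intro nn_integral_cong)
    fix \<theta> :: real
    show "(\<integral>\<^sup>+y. ennreal (G p m f x a b \<beta> y \<theta> * (\<Prod>j<m. h j (y j))) \<partial>count_space (obs_space m))
       = ennreal (gamma_dens a b \<theta> * (\<Prod>j<m. V j \<theta>))"
    proof (cases "0 < \<theta>")
      case False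
      then show ?thesis by (simp add: G_def gamma_dens_def)
    next
      case True
      have gd: "0 \<le> gamma_dens a b \<theta>" using a b by (simp add: gamma_dens_def Gamma_real_pos less_imp_le)
      have pn: "0 \<le> poisson_dens (\<theta> * mu p f x \<beta> j) n" for j n
        using True by (intro pois_nonneg) (simp add: mu_pos less_imp_le)
      have "(\<integral>\<^sup>+y. ennreal (G p m f x a b \<beta> y \<theta> * (\<Prod>j<m. h j (y j))) \<partial>count_space (obs_space m))
         = (\<integral>\<^sup>+y. ennreal (gamma_dens a b \<theta>) * (\<Prod>j<m. ennreal (poisson_dens (\<theta> * mu p f x \<beta> j) (y j) * h j (y j))) \<partial>count_space (obs_space m))"
      proof (intro nn_integral_cong)
        fix y :: "nat \<Rightarrow> nat"
        have "G p m f x a b \<beta> y \<theta> * (\<Prod>j<m. h j (y j)) = gamma_dens a b \<theta> * (\<Prod>j<m. poisson_dens (\<theta> * mu p f x \<beta> j) (y j) * h j (y j))"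
          by (simp add: G_def mu_def prod.distrib mult.assoc)
        also have "ennreal \<dots> = ennreal (gamma_dens a b \<theta>) * ennreal (\<Prod>j<m. poisson_dens (\<theta> * mu p f x \<beta> j) (y j) * h j (y j))"
          using gd by (rule ennreal_mult')
        also have "ennreal (\<Prod>j<m. poisson_dens (\<theta> * mu p f x \<beta> j) (y j) * h j (y j)) = (\<Prod>j<m. ennreal (poisson_dens (\<theta> * mu p f x \<beta> j) (y j) * h j (y j)))"
          using pn hnn by (intro prod_ennreal[symmetric]) simp
        finally show "ennreal (G p m f x a b \<beta> y \<theta> * (\<Prod>j<m. h j (y j))) = ennreal (gamma_dens a b \<theta>) * (\<Prod>j<m. ennreal (poisson_dens (\<theta> * mu p f x \<beta> j) (y j) * h j (y j)))" .
      qed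
      also have "\<dots> = ennreal (gamma_dens a b \<theta>) * (\<Prod>j<m. \<integral>\<^sup>+n. ennreal (poisson_dens (\<theta> * mu p f x \<beta> j) n * h j n) \<partial>count_space UNIV)"
        by (subst nn_integral_cmult) (simp_all add: fact_sum[where g="\<lambda>j n. ennreal (poisson_dens (\<theta> * mu p f x \<beta> j) n * h j n)"])
      also have "\<dots> = ennreal (gamma_dens a b \<theta>) * (\<Prod>j<m. ennreal (V j \<theta>))"
        using True Vs hnn by (intro arg_cong2[where f="(*)"] prod.cong refl pois_nn)
          (auto simp: mu_pos less_imp_le)
      also have "\<dots> = ennreal (gamma_dens a b \<theta> * (\<Prod>j<m. V j \<theta>))"
        using gd Vnn True by (subst prod_ennreal) (auto simp: ennreal_mult')
      finally show ?thesis .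
    qed
  qed
  also have "\<dots> = ennreal R" by (rule R)
  finally show "(\<integral>\<^sup>+y. ennreal (marg_pmf p m f x a b \<beta> y * (\<Prod>j<m. h j (y j))) \<partial>count_space (obs_space m)) = ennreal R" .
qed

lemma gd_nonneg: "0 < a \<Longrightarrow> 0 < b \<Longrightarrow> 0 \<le> gamma_dens a b \<theta>"
  by (simp add: gamma_dens_def Gamma_real_pos less_imp_le)

lemma gd_meas[measurable]: "gamma_dens a b \<in> borel_measurable borel"
  unfolding gamma_dens_def[abs_def] by measurable

lemma Gp1: "0 < (a::real) \<Longrightarrow> Gamma (a + 1) = a * Gamma a"
  using nonpos_Ints_nonpos[of a] by (intro Gamma_plus1) force

lemma H0:
  assumes a: "0 < a" and b: "0 < b"
  shows "((\<lambda>y. marg_pmf p m f x a b \<beta> y) has_sum 1) (obs_space m)"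
proof -
  have "((\<lambda>y. marg_pmf p m f x a b \<beta> y * (\<Prod>j<m. (\<lambda>j n. 1::real) j (y j))) has_sum 1) (obs_space m)"
  proof (rule MOM[where V="\<lambda>j \<theta>. 1"])
    show "(\<integral>\<^sup>+\<theta>. ennreal (gamma_dens a b \<theta> * (\<Prod>j<m. 1)) \<partial>lborel) = ennreal 1"
      using gamma_mom[OF a b, of 0] Gamma_real_pos[OF a] by simp
  qed (use a b pois0 in auto)
  then show ?thesis by simp
qed

lemma H1:
  assumes a: "0 < a" and b: "0 < b" and i: "i < m"
  shows "((\<lambda>y. marg_pmf p m f x a b \<beta> y * real (y i)) has_sum (a / b * mu p f x \<beta> i)) (obs_space m)"
proof -
  have "((\<lambda>y. marg_pmf p m f x a b \<beta> y * (\<Prod>j<m. (\<lambda>j n. if j = i then real n else 1) j (y j))) has_sum (a / b * mu p f x \<beta> i)) (obs_space m)"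
  proof (rule MOM[where V="\<lambda>j \<theta>. if j = i then \<theta> * mu p f x \<beta> i else 1"])
    have "(\<integral>\<^sup>+\<theta>. ennreal (gamma_dens a b \<theta> * (\<Prod>j<m. if j = i then \<theta> * mu p f x \<beta> i else 1)) \<partial>lborel)
       = (\<integral>\<^sup>+\<theta>. ennreal (mu p f x \<beta> i) * ennreal (gamma_dens a b \<theta> * \<theta> ^ 1) \<partial>lborel)"
    proof (intro nn_integral_cong)
      fix \<theta> :: real
      have "gamma_dens a b \<theta> * (\<Prod>j<m. if j = i then \<theta> * mu p f x \<beta> i else 1) = mu p f x \<beta> i * (gamma_dens a b \<theta> * \<theta> ^ 1)"
        using i by (simp add: prod.delta mult_ac)
      moreover have nn: "0 \<le> mu p f x \<beta> i" by (simp add: mu_pos less_imp_le)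
      ultimately show "ennreal (gamma_dens a b \<theta> * (\<Prod>j<m. if j = i then \<theta> * mu p f x \<beta> i else 1)) = ennreal (mu p f x \<beta> i) * ennreal (gamma_dens a b \<theta> * \<theta> ^ 1)"
        by (simp only: ennreal_mult'[OF nn])
    qed
    also have "\<dots> = ennreal (mu p f x \<beta> i) * ennreal (Gamma (a + real 1) / (Gamma a * b ^ 1))"
      using gamma_mom[OF a b, of 1] by (subst nn_integral_cmult) simp_all
    also have "\<dots> = ennreal (a / b * mu p f x \<beta> i)"
    proof -
      have "Gamma (a + real 1) / (Gamma a * b ^ 1) = a / b"
        using Gamma_real_pos[OF a] Gp1[OF a] by simp
      then show ?thesis
        by (subst ennreal_mult'[symmetric]) (auto simp: mu_pos less_imp_le mult.commute)
    qed
    finally show "(\<integral>\<^sup>+\<theta>. ennreal (gamma_dens a b \<theta> * (\<Prod>j<m. if j = i then \<theta> * mu p f x \<beta> i else 1)) \<partial>lborel) = ennreal (a / b * mu p f x \<beta> i)" .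
  qed (use a b pois0 pois1 in \<open>auto simp: mu_pos less_imp_le\<close>)
  then show ?thesis using i by (simp add: prod.delta)
qed

lemma G2: "0 < (a::real) \<Longrightarrow> 0 < (b::real) \<Longrightarrow> Gamma (a + real 2) / (Gamma a * b ^ 2) = a * (a + 1) / b ^ 2"
proof -
  assume a: "0 < a" and b: "0 < b"
  have "Gamma (a + real 2) = Gamma ((a + 1) + 1)" by (simp add: add.assoc)
  also have "\<dots> = (a + 1) * Gamma (a + 1)" using a by (intro Gp1) simp
  also have "\<dots> = (a + 1) * (a * Gamma a)" by (simp only: Gp1[OF a])
  finally show ?thesis using Gamma_real_pos[OF a] b by (simp add: field_simps)
qed

lemma H2ne:
  assumes a: "0 < a" and b: "0 < b" and i: "i < m" and k: "k < m" and ik: "i \<noteq> k"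
  shows "((\<lambda>y. marg_pmf p m f x a b \<beta> y * (real (y i) * real (y k))) has_sum
      (a * (a + 1) / b ^ 2 * (mu p f x \<beta> i * mu p f x \<beta> k))) (obs_space m)"
proof -
  define h where "h = (\<lambda>j n. (if j = i then real n else 1) * (if j = k then real n else (1::real)))"
  define V where "V = (\<lambda>j \<theta>. (if j = i then \<theta> * mu p f x \<beta> i else 1) * (if j = k then \<theta> * mu p f x \<beta> k else (1::real)))"
  have hp: "(\<Prod>j<m. h j (y j)) = real (y i) * real (y k)" for y
    using i k by (simp add: h_def prod.distrib prod.delta)
  have Vp: "(\<Prod>j<m. V j \<theta>) = \<theta> * mu p f x \<beta> i * (\<theta> * mu p f x \<beta> k)" for \<theta>
    using i k by (simp add: V_def prod.distrib prod.delta)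
  have "((\<lambda>y. marg_pmf p m f x a b \<beta> y * (\<Prod>j<m. h j (y j))) has_sum (a * (a + 1) / b ^ 2 * (mu p f x \<beta> i * mu p f x \<beta> k))) (obs_space m)"
  proof (rule MOM[where V=V])
    have "(\<integral>\<^sup>+\<theta>. ennreal (gamma_dens a b \<theta> * (\<Prod>j<m. V j \<theta>)) \<partial>lborel)
       = (\<integral>\<^sup>+\<theta>. ennreal (mu p f x \<beta> i * mu p f x \<beta> k) * ennreal (gamma_dens a b \<theta> * \<theta> ^ 2) \<partial>lborel)"
    proof (intro nn_integral_cong)
      fix \<theta> :: real
      have "gamma_dens a b \<theta> * (\<Prod>j<m. V j \<theta>) = (mu p f x \<beta> i * mu p f x \<beta> k) * (gamma_dens a b \<theta> * \<theta> ^ 2)"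
        by (simp add: Vp power2_eq_square mult_ac)
      moreover have nn: "0 \<le> mu p f x \<beta> i * mu p f x \<beta> k" by (simp add: mu_pos less_imp_le)
      ultimately show "ennreal (gamma_dens a b \<theta> * (\<Prod>j<m. V j \<theta>)) = ennreal (mu p f x \<beta> i * mu p f x \<beta> k) * ennreal (gamma_dens a b \<theta> * \<theta> ^ 2)"
        by (simp only: ennreal_mult'[OF nn])
    qed
    also have "\<dots> = ennreal (mu p f x \<beta> i * mu p f x \<beta> k) * ennreal (Gamma (a + real 2) / (Gamma a * b ^ 2))"
      using gamma_mom[OF a b, of 2] by (subst nn_integral_cmult) simp_all
    also have "\<dots> = ennreal (a * (a + 1) / b ^ 2 * (mu p f x \<beta> i * mu p f x \<beta> k))"
      unfolding G2[OF a b] by (subst ennreal_mult'[symmetric]) (auto simp: mu_pos less_imp_le mult.commute)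
    finally show "(\<integral>\<^sup>+\<theta>. ennreal (gamma_dens a b \<theta> * (\<Prod>j<m. V j \<theta>)) \<partial>lborel) = ennreal (a * (a + 1) / b ^ 2 * (mu p f x \<beta> i * mu p f x \<beta> k))" .
    show "(\<lambda>n. poisson_dens (\<theta> * mu p f x \<beta> j) n * h j n) sums V j \<theta>" for j \<theta>
      using ik pois0 pois1 by (auto simp: h_def V_def)
  qed (use a b in \<open>auto simp: mu_pos less_imp_le h_def V_def\<close>)
  then show ?thesis by (simp add: hp)
qed

lemma H2eq:
  assumes a: "0 < a" and b: "0 < b" and i: "i < m"
  shows "((\<lambda>y. marg_pmf p m f x a b \<beta> y * (real (y i) * real (y i))) has_sum
      (a / b * mu p f x \<beta> i + a * (a + 1) / b ^ 2 * (mu p f x \<beta> i * mu p f x \<beta> i))) (obs_space m)"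
proof -
  define h where "h = (\<lambda>j n. if j = i then real n * real n else (1::real))"
  define V where "V = (\<lambda>j \<theta>. if j = i then \<theta> * mu p f x \<beta> i + \<theta> * mu p f x \<beta> i * (\<theta> * mu p f x \<beta> i) else (1::real))"
  have hp: "(\<Prod>j<m. h j (y j)) = real (y i) * real (y i)" for y
    using i by (simp add: h_def prod.delta)
  have Vp: "(\<Prod>j<m. V j \<theta>) = \<theta> * mu p f x \<beta> i + \<theta> * mu p f x \<beta> i * (\<theta> * mu p f x \<beta> i)" for \<theta>
    using i by (simp add: V_def prod.delta)
  have "((\<lambda>y. marg_pmf p m f x a b \<beta> y * (\<Prod>j<m. h j (y j))) has_sum (a / b * mu p f x \<beta> i + a * (a + 1) / b ^ 2 * (mu p f x \<beta> i * mu p f x \<beta> i))) (obs_space m)"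
  proof (rule MOM[where V=V])
    have "(\<integral>\<^sup>+\<theta>. ennreal (gamma_dens a b \<theta> * (\<Prod>j<m. V j \<theta>)) \<partial>lborel)
       = (\<integral>\<^sup>+\<theta>. ennreal (mu p f x \<beta> i) * ennreal (gamma_dens a b \<theta> * \<theta> ^ 1) +
             ennreal (mu p f x \<beta> i * mu p f x \<beta> i) * ennreal (gamma_dens a b \<theta> * \<theta> ^ 2) \<partial>lborel)"
    proof (intro nn_integral_cong)
      fix \<theta> :: real
      have g: "0 \<le> gamma_dens a b \<theta>" by (rule gd_nonneg[OF a b])
      show "ennreal (gamma_dens a b \<theta> * (\<Prod>j<m. V j \<theta>)) = ennreal (mu p f x \<beta> i) * ennreal (gamma_dens a b \<theta> * \<theta> ^ 1) +
             ennreal (mu p f x \<beta> i * mu p f x \<beta> i) * ennreal (gamma_dens a b \<theta> * \<theta> ^ 2)"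
      proof (cases "0 < \<theta>")
        case True
        have e: "gamma_dens a b \<theta> * (\<Prod>j<m. V j \<theta>) = mu p f x \<beta> i * (gamma_dens a b \<theta> * \<theta> ^ 1) +
             (mu p f x \<beta> i * mu p f x \<beta> i) * (gamma_dens a b \<theta> * \<theta> ^ 2)"
          by (simp only: Vp) (simp add: power2_eq_square algebra_simps)
        have n1: "0 \<le> mu p f x \<beta> i" by (simp add: mu_pos less_imp_le)
        have n2: "0 \<le> mu p f x \<beta> i * mu p f x \<beta> i" by (simp add: mu_pos less_imp_le)
        have n3: "0 \<le> gamma_dens a b \<theta> * \<theta> ^ 1" using g True by simp
        have n4: "0 \<le> gamma_dens a b \<theta> * \<theta> ^ 2" using g True by simp
        show ?thesis unfolding e
          by (simp only: ennreal_plus[OF mult_nonneg_nonneg[OF n1 n3] mult_nonneg_nonneg[OF n2 n4]]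
              ennreal_mult'[OF n1] ennreal_mult'[OF n2])
      next
        case False
        then show ?thesis by (simp add: gamma_dens_def)
      qed
    qed
    also have "\<dots> = ennreal (mu p f x \<beta> i) * ennreal (Gamma (a + real 1) / (Gamma a * b ^ 1)) +
        ennreal (mu p f x \<beta> i * mu p f x \<beta> i) * ennreal (Gamma (a + real 2) / (Gamma a * b ^ 2))"
      using gamma_mom[OF a b, of 1] gamma_mom[OF a b, of 2]
      by (subst nn_integral_add) (simp_all add: nn_integral_cmult del: of_nat_numeral)
    also have "\<dots> = ennreal (a / b * mu p f x \<beta> i + a * (a + 1) / b ^ 2 * (mu p f x \<beta> i * mu p f x \<beta> i))"
    proof -
      have "Gamma (a + real 1) / (Gamma a * b ^ 1) = a / b"
        using Gamma_real_pos[OF a] Gp1[OF a] by simp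
      moreover have n1: "0 \<le> mu p f x \<beta> i" by (simp add: mu_pos less_imp_le)
      moreover have n2: "0 \<le> mu p f x \<beta> i * mu p f x \<beta> i" by (simp add: mu_pos less_imp_le)
      moreover have q1: "0 \<le> a / b" using a b by simp
      moreover have q2: "0 \<le> a * (a + 1) / b ^ 2" using a b by simp
      ultimately show ?thesis unfolding G2[OF a b]
        by (simp only: ennreal_plus[OF mult_nonneg_nonneg[OF q1 n1] mult_nonneg_nonneg[OF q2 n2]]
              ennreal_mult'[OF q1] ennreal_mult'[OF q2] mult.commute)
    qed
    finally show "(\<integral>\<^sup>+\<theta>. ennreal (gamma_dens a b \<theta> * (\<Prod>j<m. V j \<theta>)) \<partial>lborel) = ennreal (a / b * mu p f x \<beta> i + a * (a + 1) / b ^ 2 * (mu p f x \<beta> i * mu p f x \<beta> i))" .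
    show "(\<lambda>n. poisson_dens (\<theta> * mu p f x \<beta> j) n * h j n) sums V j \<theta>" for j \<theta>
      using pois0 pois2 by (auto simp: h_def V_def)
  qed (use a b in \<open>auto simp: mu_pos less_imp_le h_def V_def\<close>)
  then show ?thesis by (simp add: hp)
qed

lemma hs_sum:
  fixes f :: "'i \<Rightarrow> 'a \<Rightarrow> real"
  assumes "finite I" "\<And>i. i \<in> I \<Longrightarrow> (f i has_sum v i) A"
  shows "((\<lambda>y. \<Sum>i\<in>I. f i y) has_sum (\<Sum>i\<in>I. v i)) A"
  using assms
proof (induction I rule: finite_induct)
  case empty
  then show ?case by simp
next
  case (insert i I)
  then show ?case by (simp add: has_sum_add)
qed

lemma hs_diff:
  fixes f g :: "'a \<Rightarrow> real"
  assumes "(f has_sum u) A" "(g has_sum v) A"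
  shows "((\<lambda>y. f y - g y) has_sum (u - v)) A"
  using has_sum_add[OF assms(1) has_sum_cmult_right[OF assms(2), of "-1"]]
  by simp

lemma alg:
  fixes \<mu> F G :: "nat \<Rightarrow> real" and a b :: real and m :: nat
  assumes b: "0 < b" and mu: "\<And>j. 0 < \<mu> j"
  defines "D \<equiv> b + (\<Sum>j<m. \<mu> j)"
  defines "cF \<equiv> (\<Sum>j<m. \<mu> j * F j)" and "cG \<equiv> (\<Sum>j<m. \<mu> j * G j)"
  shows "(\<Sum>j<m. \<Sum>k<m. (F j - cF / D) * (G k - cG / D) *
            (a / b * \<mu> j * (if j = k then 1 else 0) + a * (a + 1) / b ^ 2 * (\<mu> j * \<mu> k)))
         - a * cG / D * (\<Sum>j<m. (F j - cF / D) * (a / b * \<mu> j))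
         - a * cF / D * (\<Sum>k<m. (G k - cG / D) * (a / b * \<mu> k))
         + a * cF / D * (a * cG / D) * 1
       = a / b * ((\<Sum>j<m. \<mu> j * F j * G j) - cF * cG / D)"
proof -
  define M where "M = (\<Sum>j<m. \<mu> j)"
  have M0: "0 \<le> M" unfolding M_def using mu by (intro sum_nonneg) (simp add: less_imp_le)
  have D0: "0 < D" using b M0 by (simp add: D_def M_def)
  have s1: "(\<Sum>j<m. \<Sum>k<m. (F j - cF / D) * (G k - cG / D) *
            (a / b * \<mu> j * (if j = k then 1 else 0) + a * (a + 1) / b ^ 2 * (\<mu> j * \<mu> k)))
     = a / b * (\<Sum>j<m. \<mu> j * (F j - cF / D) * (G j - cG / D))
       + a * (a + 1) / b ^ 2 * ((\<Sum>j<m. \<mu> j * (F j - cF / D)) * (\<Sum>k<m. \<mu> k * (G k - cG / D)))"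
  proof -
    define gF where "gF j = F j - cF / D" for j
    define gG where "gG j = G j - cG / D" for j
    have e: "gF j * gG k * (a / b * \<mu> j * (if j = k then 1 else 0) + a * (a + 1) / b ^ 2 * (\<mu> j * \<mu> k))
       = (if k = j then a / b * (\<mu> j * gF j * gG j) else 0) + a * (a + 1) / b ^ 2 * ((\<mu> j * gF j) * (\<mu> k * gG k))" for j k
      by (simp add: algebra_simps)
    have "(\<Sum>j<m. \<Sum>k<m. gF j * gG k * (a / b * \<mu> j * (if j = k then 1 else 0) + a * (a + 1) / b ^ 2 * (\<mu> j * \<mu> k)))
       = (\<Sum>j<m. a / b * (\<mu> j * gF j * gG j)) + (\<Sum>j<m. \<Sum>k<m. a * (a + 1) / b ^ 2 * ((\<mu> j * gF j) * (\<mu> k * gG k)))"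
      unfolding e by (simp add: sum.distrib)
    also have "\<dots> = a / b * (\<Sum>j<m. \<mu> j * gF j * gG j) + a * (a + 1) / b ^ 2 * ((\<Sum>j<m. \<mu> j * gF j) * (\<Sum>k<m. \<mu> k * gG k))"
      unfolding sum_product by (simp only: sum_distrib_left)
    finally show ?thesis unfolding gF_def gG_def .
  qed
  have s2F: "(\<Sum>j<m. \<mu> j * (F j - cF / D)) = cF - M * cF / D"
    by (simp only: right_diff_distrib sum_subtractf sum_distrib_right[symmetric] cF_def[symmetric] M_def[symmetric]) simp
  have s2G: "(\<Sum>j<m. \<mu> j * (G j - cG / D)) = cG - M * cG / D"
    by (simp only: right_diff_distrib sum_subtractf sum_distrib_right[symmetric] cG_def[symmetric] M_def[symmetric]) simp
  have s2F': "(\<Sum>j<m. (F j - cF / D) * (a / b * \<mu> j)) = a / b * (cF - M * cF / D)"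
    by (subst s2F[symmetric]) (simp add: sum_distrib_left mult_ac)
  have s2G': "(\<Sum>k<m. (G k - cG / D) * (a / b * \<mu> k)) = a / b * (cG - M * cG / D)"
    by (subst s2G[symmetric]) (simp add: sum_distrib_left mult_ac)
  have s3: "(\<Sum>j<m. \<mu> j * (F j - cF / D) * (G j - cG / D))
      = (\<Sum>j<m. \<mu> j * F j * G j) - cF * (cG / D) - cG * (cF / D) + M * (cF * cG / D^2)"
  proof -
    have pt: "\<mu> j * (F j - cF / D) * (G j - cG / D) = \<mu> j * F j * G j - (\<mu> j * F j) * (cG / D) - (\<mu> j * G j) * (cF / D) + \<mu> j * (cF * cG / D^2)" for j
      using D0 by (simp add: field_simps power2_eq_square)
    show ?thesis unfolding pt
      by (simp only: sum.distrib sum_subtractf sum_distrib_right[symmetric] cF_def[symmetric] cG_def[symmetric] M_def[symmetric])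
  qed
  have MD: "M = D - b" by (simp add: D_def M_def)
  have fin: "a/b*(I - cF*(cG/D) - cG*(cF/D) + M*(cF*cG/D^2)) + a*(a+1)/b^2 * ((cF - M*cF/D)*(cG - M*cG/D))
     - a*cG/D*(a/b*(cF - M*cF/D)) - a*cF/D*(a/b*(cG - M*cG/D)) + a*cF/D*(a*cG/D)*1 = a/b*(I - cF*cG/D)" for I
    unfolding MD using D0 b by (simp add: field_simps power2_eq_square)
  show ?thesis
    unfolding s1 s2F s2G s2F' s2G' s3 by (rule fin)
qed

lemma H2:
  assumes a: "0 < a" and b: "0 < b" and i: "i < m" and k: "k < m"
  shows "((\<lambda>y. marg_pmf p m f x a b \<beta> y * (real (y i) * real (y k))) has_sum
      (a / b * mu p f x \<beta> i * (if i = k then 1 else 0) + a * (a + 1) / b ^ 2 * (mu p f x \<beta> i * mu p f x \<beta> k))) (obs_space m)"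
  using H2eq[OF a b i, of p f x \<beta>] H2ne[OF a b i k, of p f x \<beta>] by (cases "i = k") auto

theorem theorem2:
  fixes m p :: nat and a b :: real
    and f :: "real^'k \<Rightarrow> nat \<Rightarrow> real" and x :: "nat \<Rightarrow> real^'k" and \<beta> :: "nat \<Rightarrow> real"
  assumes "0 < a" and "0 < b" and "1 \<le> p" and "\<forall>z. f z 0 = 1"
  shows "\<forall>r<p. \<forall>s<p.
     (\<forall>y\<in>obs_space m. (\<lambda>t. ln (marg_pmf p m f x a b (\<beta>(r := t)) y)) differentiable (at (\<beta> r))) \<and>
     ((\<lambda>y. marg_pmf p m f x a b \<beta> y * score p m f x a b \<beta> y r * score p m f x a b \<beta> y s)
       has_sum
      (a / b * (I_Po p m f x \<beta> r s
         - (\<Sum>k<p. \<Sum>l<p. I_Po p m f x \<beta> r k * e1 k * e1 l * I_Po p m f x \<beta> l s)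
           / ((\<Sum>k<p. \<Sum>l<p. e1 k * I_Po p m f x \<beta> k l * e1 l) + b))))
      (obs_space m)"
proof (intro allI impI conjI ballI)
  note a = assms(1) and b = assms(2) and p1 = assms(3) and f0 = assms(4)
  fix r s assume r: "r < p" and s: "s < p"
  show "(\<lambda>t. ln (marg_pmf p m f x a b (\<beta>(r := t)) y)) differentiable (at (\<beta> r))" for y
    using score_deriv[OF a b r, of m f x \<beta> y] unfolding has_field_derivative_def
    by (rule differentiableI)
  define \<mu> where "\<mu> = mu p f x \<beta>"
  define D where "D = b + (\<Sum>j<m. \<mu> j)"
  define c where "c t = (\<Sum>j<m. \<mu> j * f (x j) t)" for t
  define g where "g t j = f (x j) t - c t / D" for t j
  define \<alpha> where "\<alpha> t = a * c t / D" for t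
  have sc: "score p m f x a b \<beta> y t = (\<Sum>j<m. real (y j) * g t j) - \<alpha> t" if t: "t < p" for y t
  proof -
    have "score p m f x a b \<beta> y t = (\<Sum>j<m. real (y j) * f (x j) t) - (a + real (\<Sum>j<m. y j)) * c t / D"
      unfolding score_def c_def D_def \<mu>_def
      by (rule DERIV_imp_deriv[OF score_deriv[OF a b t]])
    also have "\<dots> = (\<Sum>j<m. real (y j) * g t j) - \<alpha> t"
      unfolding g_def \<alpha>_def
      by (simp add: right_diff_distrib sum_subtractf sum_distrib_right[symmetric] add_divide_distrib distrib_right)
        (simp add: sum_distrib_right sum_divide_distrib)
    finally show ?thesis .
  qed
  have pw: "marg_pmf p m f x a b \<beta> y * score p m f x a b \<beta> y r * score p m f x a b \<beta> y s
     = (\<Sum>j<m. \<Sum>k<m. g r j * g s k * (marg_pmf p m f x a b \<beta> y * (real (y j) * real (y k))))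
       - \<alpha> s * (\<Sum>j<m. g r j * (marg_pmf p m f x a b \<beta> y * real (y j)))
       - \<alpha> r * (\<Sum>k<m. g s k * (marg_pmf p m f x a b \<beta> y * real (y k)))
       + \<alpha> r * \<alpha> s * marg_pmf p m f x a b \<beta> y" for y
  proof -
    define P where "P = marg_pmf p m f x a b \<beta> y"
    define A where "A = (\<Sum>j<m. real (y j) * g r j)"
    define B where "B = (\<Sum>k<m. real (y k) * g s k)"
    have "P * (A - \<alpha> r) * (B - \<alpha> s) = P * (A * B) - \<alpha> s * (P * A) - \<alpha> r * (P * B) + \<alpha> r * \<alpha> s * P"
      by (simp add: algebra_simps)
    moreover have "P * (A * B) = (\<Sum>j<m. \<Sum>k<m. g r j * g s k * (P * (real (y j) * real (y k))))"
      unfolding A_def B_def sum_product by (simp add: sum_distrib_left mult_ac)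
    moreover have "P * A = (\<Sum>j<m. g r j * (P * real (y j)))"
      unfolding A_def by (simp add: sum_distrib_left mult_ac)
    moreover have "P * B = (\<Sum>k<m. g s k * (P * real (y k)))"
      unfolding B_def by (simp add: sum_distrib_left mult_ac)
    ultimately show ?thesis using sc[OF r, of y] sc[OF s, of y]
      unfolding P_def A_def B_def by simp
  qed
  have HS: "((\<lambda>y. marg_pmf p m f x a b \<beta> y * score p m f x a b \<beta> y r * score p m f x a b \<beta> y s) has_sum
      ((\<Sum>j<m. \<Sum>k<m. g r j * g s k * (a / b * \<mu> j * (if j = k then 1 else 0) + a * (a + 1) / b ^ 2 * (\<mu> j * \<mu> k)))
       - \<alpha> s * (\<Sum>j<m. g r j * (a / b * \<mu> j))
       - \<alpha> r * (\<Sum>k<m. g s k * (a / b * \<mu> k))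
       + \<alpha> r * \<alpha> s * 1)) (obs_space m)"
    unfolding pw \<mu>_def
    by (intro has_sum_add hs_diff hs_sum has_sum_cmult_right H0 H1 H2 a b) auto
  have val: "(\<Sum>j<m. \<Sum>k<m. g r j * g s k * (a / b * \<mu> j * (if j = k then 1 else 0) + a * (a + 1) / b ^ 2 * (\<mu> j * \<mu> k)))
       - \<alpha> s * (\<Sum>j<m. g r j * (a / b * \<mu> j))
       - \<alpha> r * (\<Sum>k<m. g s k * (a / b * \<mu> k))
       + \<alpha> r * \<alpha> s * 1 = a / b * ((\<Sum>j<m. \<mu> j * f (x j) r * f (x j) s) - c r * c s / D)"
    unfolding g_def \<alpha>_def c_def D_def
    by (rule alg[OF b]) (simp add: \<mu>_def mu_pos)
  have I_eq: "I_Po p m f x \<beta> r s = (\<Sum>j<m. \<mu> j * f (x j) r * f (x j) s)"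
    by (simp add: I_Po_def \<mu>_def mu_def)
  have p0: "0 \<in> {..<p}" using p1 by simp
  have num: "(\<Sum>k<p. \<Sum>l<p. I_Po p m f x \<beta> r k * e1 k * e1 l * I_Po p m f x \<beta> l s) = c r * c s"
  proof -
    have "(\<Sum>k<p. \<Sum>l<p. I_Po p m f x \<beta> r k * e1 k * e1 l * I_Po p m f x \<beta> l s)
        = I_Po p m f x \<beta> r 0 * I_Po p m f x \<beta> 0 s"
    proof -
      have e: "I_Po p m f x \<beta> r k * e1 k * e1 l * I_Po p m f x \<beta> l s = (if k = 0 then (if l = 0 then I_Po p m f x \<beta> r 0 * I_Po p m f x \<beta> 0 s else 0) else 0)" for k l
        by (simp add: e1_def)
      show ?thesis unfolding e using p0 by (simp add: sum.If_cases)
    qed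
    also have "\<dots> = c r * c s"
      using f0 by (simp add: I_Po_def c_def \<mu>_def mu_def mult.commute)
    finally show ?thesis .
  qed
  have den: "(\<Sum>k<p. \<Sum>l<p. e1 k * I_Po p m f x \<beta> k l * e1 l) + b = D"
  proof -
    have "(\<Sum>k<p. \<Sum>l<p. e1 k * I_Po p m f x \<beta> k l * e1 l) = I_Po p m f x \<beta> 0 0"
    proof -
      have e: "e1 k * I_Po p m f x \<beta> k l * e1 l = (if k = 0 then (if l = 0 then I_Po p m f x \<beta> 0 0 else 0) else 0)" for k l
        by (simp add: e1_def)
      show ?thesis unfolding e using p0 by (simp add: sum.If_cases)
    qed
    also have "\<dots> = (\<Sum>j<m. \<mu> j)"
      using f0 by (simp add: I_Po_def \<mu>_def mu_def)
    finally show ?thesis by (simp add: D_def)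
  qed
  show "((\<lambda>y. marg_pmf p m f x a b \<beta> y * score p m f x a b \<beta> y r * score p m f x a b \<beta> y s)
       has_sum
      (a / b * (I_Po p m f x \<beta> r s
         - (\<Sum>k<p. \<Sum>l<p. I_Po p m f x \<beta> r k * e1 k * e1 l * I_Po p m f x \<beta> l s)
           / ((\<Sum>k<p. \<Sum>l<p. e1 k * I_Po p m f x \<beta> k l * e1 l) + b))))
      (obs_space m)"
    unfolding num den I_eq using HS val by simp
qed

end
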